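(* Let $G=G(n_1,n_2,p)$ where $1\ll n_1\leq n_2$ and $p=\frac{d}{\sqrt{n_1n_2}}$ for a constant $d>1$. Then whp $f(G)=o(n_1)$.
   Context: $G(n_1,n_2,p)$ is the binomial random bipartite graph: each edge of $K_{n_1,n_2}$ is present independently with probability $p$. $f(G)$ denotes the number of faces of $G$ when embedded on an orientable surface of minimal genus. $1\ll n_1$ means $n_1\to\infty$; "whp" means with probability tending to $1$ as $n_1\to\infty$. *)

theory Defs
  imports "HOL-Probability.Probability" "HOL-Combinatorics.Permutations"
begin

definition darts :: "'a set \<Rightarrow> ('a \<Rightarrow> 'a \<Rightarrow> bool) \<Rightarrow> ('a \<times> 'a) set" where
  "darts V adj = {(u, v). u \<in> V \<and> v \<in> V \<and> adj u v}"

definition rotation_system ::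
  "'a set \<Rightarrow> ('a \<Rightarrow> 'a \<Rightarrow> bool) \<Rightarrow> ('a \<times> 'a \<Rightarrow> 'a \<times> 'a) \<Rightarrow> bool" where
  "rotation_system V adj \<sigma> \<longleftrightarrow>
     \<sigma> permutes darts V adj \<and>
     (\<forall>x\<in>darts V adj. fst (\<sigma> x) = fst x) \<and>
     (\<forall>x\<in>darts V adj. \<forall>y\<in>darts V adj. fst x = fst y \<longrightarrow> (\<exists>k. (\<sigma> ^^ k) x = y))"

text \<open>Face-tracing permutation: after traversing dart (u,v), continue with the
  successor of the reverse dart (v,u) in the rotation at v.\<close>
definition face_perm :: "('a \<times> 'a \<Rightarrow> 'a \<times> 'a) \<Rightarrow> 'a \<times> 'a \<Rightarrow> 'a \<times> 'a" where
  "face_perm \<sigma> x = \<sigma> (snd x, fst x)"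

definition face_orbit :: "('a \<times> 'a \<Rightarrow> 'a \<times> 'a) \<Rightarrow> 'a \<times> 'a \<Rightarrow> ('a \<times> 'a) set" where
  "face_orbit \<sigma> x = {(face_perm \<sigma> ^^ k) x | k. True}"

definition num_faces_rot ::
  "'a set \<Rightarrow> ('a \<Rightarrow> 'a \<Rightarrow> bool) \<Rightarrow> ('a \<times> 'a \<Rightarrow> 'a \<times> 'a) \<Rightarrow> nat" where
  "num_faces_rot V adj \<sigma> = card (face_orbit \<sigma> ` darts V adj)"

definition max_faces_rot :: "'a set \<Rightarrow> ('a \<Rightarrow> 'a \<Rightarrow> bool) \<Rightarrow> nat" where
  "max_faces_rot V adj = Max (num_faces_rot V adj ` {\<sigma>. rotation_system V adj \<sigma>})"

definition num_components :: "'a set \<Rightarrow> ('a \<Rightarrow> 'a \<Rightarrow> bool) \<Rightarrow> nat" where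
  "num_components V adj =
     card {{y \<in> V. (\<lambda>a b. a \<in> V \<and> b \<in> V \<and> adj a b)\<^sup>*\<^sup>* x y} | x. x \<in> V}"

definition num_isolated :: "'a set \<Rightarrow> ('a \<Rightarrow> 'a \<Rightarrow> bool) \<Rightarrow> nat" where
  "num_isolated V adj = card {v \<in> V. \<forall>w\<in>V. \<not> adj v w}"

text \<open>A minimum genus embedding of G is the connected sum of minimum genus cellular
  embeddings of its components C_1..C_c (genus is additive over components), so
  f(G) = 1 + \<Sum>_i (f(C_i) - 1), where f(C_i) is the maximum number of faces over
  rotation systems of C_i (Heffter--Edmonds), and an isolated vertex has 1 face.
  Since faces of a rotation system stay within components, this equals the
  formula below.\<close>
definition min_genus_faces :: "'a set \<Rightarrow> ('a \<Rightarrow> 'a \<Rightarrow> bool) \<Rightarrow> int" where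
  "min_genus_faces V adj =
     int (max_faces_rot V adj) + int (num_isolated V adj) - int (num_components V adj) + 1"

definition bip_verts :: "nat \<Rightarrow> nat \<Rightarrow> (nat + nat) set" where
  "bip_verts n1 n2 = Inl ` {..<n1} \<union> Inr ` {..<n2}"

fun bip_adj :: "(nat \<times> nat \<Rightarrow> bool) \<Rightarrow> nat + nat \<Rightarrow> nat + nat \<Rightarrow> bool" where
  "bip_adj E (Inl i) (Inr j) = E (i, j)"
| "bip_adj E (Inr j) (Inl i) = E (i, j)"
| "bip_adj E _ _ = False"

definition G_bip :: "nat \<Rightarrow> nat \<Rightarrow> real \<Rightarrow> (nat \<times> nat \<Rightarrow> bool) pmf" where
  "G_bip n1 n2 p = Pi_pmf ({..<n1} \<times> {..<n2}) False (\<lambda>_. bernoulli_pmf p)"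

definition f_bip :: "nat \<Rightarrow> nat \<Rightarrow> (nat \<times> nat \<Rightarrow> bool) \<Rightarrow> int" where
  "f_bip n1 n2 E = min_genus_faces (bip_verts n1 n2) (bip_adj E)"

end

theory Submission
  imports Defs "HOL-Combinatorics.Orbits" "HOL-Combinatorics.Cycles"
begin

lemma walk_exists:
  assumes "R\<^sup>*\<^sup>* a b"
  shows "\<exists>ps. ps \<noteq> [] \<and> hd ps = a \<and> last ps = b \<and> successively R ps"
  using assms
proof (induction rule: rtranclp_induct)
  case base
  then show ?case by (intro exI[of _ "[a]"]) auto
next
  case (step y z)
  then obtain ps where ps: "ps \<noteq> []" "hd ps = a" "last ps = y" "successively R ps" by auto
  have "successively R (ps @ [z])"
    using ps step(2) by (auto simp: successively_append_iff)
  then show ?case using ps by (intro exI[of _ "ps @ [z]"]) auto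
qed

lemma path_exists:
  assumes "R\<^sup>*\<^sup>* a b"
  shows "\<exists>ps. ps \<noteq> [] \<and> hd ps = a \<and> last ps = b \<and> successively R ps \<and> distinct ps"
proof -
  define P where "P = (\<lambda>n. \<exists>ps. length ps = n \<and> ps \<noteq> [] \<and> hd ps = a \<and> last ps = b \<and> successively R ps)"
  from walk_exists[OF assms] have "\<exists>n. P n" unfolding P_def by blast
  then obtain n where n: "P n" and nmin: "\<And>m. P m \<Longrightarrow> n \<le> m"
    by (metis ex_has_least_nat)
  then obtain ps where ps: "length ps = n" "ps \<noteq> []" "hd ps = a" "last ps = b" "successively R ps"
    unfolding P_def by blast
  have "distinct ps"
  proof (rule ccontr)
    assume "\<not> distinct ps"
    then obtain xs ys zs y where eq: "ps = xs @ [y] @ ys @ [y] @ zs"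
      using not_distinct_decomp by blast
    define qs where "qs = xs @ [y] @ zs"
    have A: "successively R (xs @ (y # ys @ y # zs))" using ps(5) eq by simp
    have B: "successively R ((xs @ y # ys) @ (y # zs))" using ps(5) eq by simp
    have "successively R xs" "xs \<noteq> [] \<longrightarrow> R (last xs) y"
      using A by (auto simp: successively_append_iff)
    moreover have "successively R (y # zs)"
      using B by (simp only: successively_append_iff)
    ultimately have "successively R qs"
      unfolding qs_def by (auto simp: successively_append_iff)
    moreover have "hd qs = a" using ps(3) unfolding eq qs_def by (cases xs) auto
    moreover have "last qs = b" using ps(4) unfolding eq qs_def by (cases zs) auto
    moreover have "qs \<noteq> []" unfolding qs_def by simp
    ultimately have "P (length qs)" unfolding P_def by blast
    hence "n \<le> length qs" by (rule nmin)
    moreover have "length qs < n" using ps(1) unfolding eq qs_def by simp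
    ultimately show False by simp
  qed
  with ps show ?thesis by blast
qed


definition gp :: "('a \<times> 'a \<Rightarrow> 'a \<times> 'a) \<Rightarrow> ('a \<times> 'a) set \<Rightarrow> 'a \<times> 'a \<Rightarrow> 'a \<times> 'a" where
  "gp \<sigma> D = (\<lambda>y. if y \<in> D then face_perm \<sigma> y else y)"

locale rotsys =
  fixes V :: "'a set" and adj :: "'a \<Rightarrow> 'a \<Rightarrow> bool" and \<sigma> :: "'a \<times> 'a \<Rightarrow> 'a \<times> 'a"
  assumes finV: "finite V"
    and symm: "\<And>a b. adj a b = adj b a"
    and irr: "\<And>a. \<not> adj a a"
    and rot: "rotation_system V adj \<sigma>"
begin

abbreviation "D \<equiv> darts V adj"
abbreviation "f \<equiv> gp \<sigma> D"

lemma D_iff: "(a, b) \<in> D \<longleftrightarrow> a \<in> V \<and> b \<in> V \<and> adj a b"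
  by (simp add: darts_def)

lemma D_swap: "(a, b) \<in> D \<Longrightarrow> (b, a) \<in> D"
  using symm by (auto simp: D_iff)

lemma finD: "finite D"
proof -
  have "D \<subseteq> V \<times> V" by (auto simp: darts_def)
  thus ?thesis using finV finite_subset by blast
qed

lemma sigma_perm: "\<sigma> permutes D" using rot by (simp add: rotation_system_def)

lemma sigma_fst: "x \<in> D \<Longrightarrow> fst (\<sigma> x) = fst x" using rot by (simp add: rotation_system_def)

lemma sigma_trans: "x \<in> D \<Longrightarrow> y \<in> D \<Longrightarrow> fst x = fst y \<Longrightarrow> \<exists>k. (\<sigma> ^^ k) x = y"
  using rot by (simp add: rotation_system_def)

lemma sigma_in: "x \<in> D \<Longrightarrow> \<sigma> x \<in> D"
  using sigma_perm by (simp add: permutes_in_image)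

lemma fp_in: "x \<in> D \<Longrightarrow> face_perm \<sigma> x \<in> D"
  by (cases x) (auto simp: face_perm_def intro!: sigma_in D_swap)

lemma f_permutes: "f permutes D"
proof -
  have b1: "bij_betw (\<lambda>x. (snd x, fst x)) D D"
    by (rule bij_betwI[where g="\<lambda>x. (snd x, fst x)"]) (auto intro: D_swap)
  have b2: "bij_betw \<sigma> D D" using sigma_perm by (rule permutes_imp_bij)
  have "bij_betw (\<sigma> \<circ> (\<lambda>x. (snd x, fst x))) D D" using b1 b2 by (rule bij_betw_trans)
  hence "bij_betw f D D"
    by (rule bij_betw_cong[THEN iffD1, rotated]) (auto simp: gp_def face_perm_def)
  thus ?thesis by (rule bij_imp_permutes) (auto simp: gp_def)
qed

lemma f_perm: "permutation f"
  using f_permutes finD permutation_permutes by blast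

lemma funpow_fp: "x \<in> D \<Longrightarrow> (face_perm \<sigma> ^^ n) x = (f ^^ n) x \<and> (f ^^ n) x \<in> D"
  by (induction n) (auto simp: gp_def fp_in)

lemma fo_eq: "x \<in> D \<Longrightarrow> face_orbit \<sigma> x = orbit f x"
  using funpow_fp by (simp add: face_orbit_def orbit_altdef_permutation[OF f_perm])

lemma fo_self: "x \<in> D \<Longrightarrow> x \<in> face_orbit \<sigma> x"
  by (simp add: fo_eq permutation_self_in_orbit[OF f_perm])

lemma fo_sub: "x \<in> D \<Longrightarrow> face_orbit \<sigma> x \<subseteq> D"
proof
  fix y assume x: "x \<in> D" and "y \<in> face_orbit \<sigma> x"
  then obtain n where "y = (face_perm \<sigma> ^^ n) x" by (auto simp: face_orbit_def)
  thus "y \<in> D" using funpow_fp[OF x, of n] by simp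
qed

lemma fo_same: "x \<in> D \<Longrightarrow> y \<in> face_orbit \<sigma> x \<Longrightarrow> face_orbit \<sigma> y = face_orbit \<sigma> x"
proof -
  assume x: "x \<in> D" and y: "y \<in> face_orbit \<sigma> x"
  hence yD: "y \<in> D" using fo_sub by blast
  have y': "y \<in> orbit f x" using y x fo_eq by simp
  have xx: "x \<in> orbit f x" by (rule permutation_self_in_orbit[OF f_perm])
  have xy: "x \<in> orbit f y" using orbit_swap[OF xx y'] .
  have "orbit f y = orbit f x"
    using orbit_trans[OF _ y'] orbit_trans[OF _ xy] by blast
  thus ?thesis using x yD fo_eq by simp
qed

lemma fo_disj: "x \<in> D \<Longrightarrow> y \<in> D \<Longrightarrow> face_orbit \<sigma> x \<inter> face_orbit \<sigma> y \<noteq> {} \<Longrightarrow>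
   face_orbit \<sigma> x = face_orbit \<sigma> y"
  using fo_same by blast

lemma fo_closed: "x \<in> D \<Longrightarrow> y \<in> face_orbit \<sigma> x \<Longrightarrow> face_perm \<sigma> y \<in> face_orbit \<sigma> x"
proof -
  assume x: "x \<in> D" and y: "y \<in> face_orbit \<sigma> x"
  then obtain n where "y = (face_perm \<sigma> ^^ n) x" by (auto simp: face_orbit_def)
  hence "face_perm \<sigma> y = (face_perm \<sigma> ^^ Suc n) x" by simp
  thus ?thesis unfolding face_orbit_def by blast
qed

definition revclosed :: "('a \<times> 'a) set \<Rightarrow> bool" where
  "revclosed Ob \<longleftrightarrow> (\<forall>a b. (a, b) \<in> Ob \<longrightarrow> (b, a) \<in> Ob)"

lemma rc_claim1:
  assumes x: "x \<in> D" and rc: "revclosed (face_orbit \<sigma> x)"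
    and ab: "(a, b) \<in> face_orbit \<sigma> x" and az: "(a, z) \<in> D"
  shows "(a, z) \<in> face_orbit \<sigma> x"
proof -
  let ?O = "face_orbit \<sigma> x"
  have abD: "(a, b) \<in> D" using ab fo_sub x by blast
  obtain k where k: "(\<sigma> ^^ k) (a, b) = (a, z)" using sigma_trans[OF abD az] by auto
  have "(\<sigma> ^^ n) (a, b) \<in> ?O" for n
  proof (induction n)
    case 0 then show ?case using ab by simp
  next
    case (Suc n)
    obtain p q where pq: "(\<sigma> ^^ n) (a, b) = (p, q)" by fastforce
    have "(q, p) \<in> ?O" using rc Suc pq by (auto simp: revclosed_def)
    hence "face_perm \<sigma> (q, p) \<in> ?O" using fo_closed x by blast
    thus ?case using pq by (simp add: face_perm_def)
  qed
  thus ?thesis using k by metis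
qed

abbreviation "adjV \<equiv> (\<lambda>a b. a \<in> V \<and> b \<in> V \<and> adj a b)"

lemma rc_cover:
  assumes x: "x \<in> D" and rc: "revclosed (face_orbit \<sigma> x)"
    and r: "adjV\<^sup>*\<^sup>* (fst x) w" and wz: "(w, z) \<in> D"
  shows "(w, z) \<in> face_orbit \<sigma> x"
proof -
  let ?O = "face_orbit \<sigma> x"
  have "\<exists>b. (w, b) \<in> ?O" using r
  proof (induction rule: rtranclp_induct)
    case base
    then show ?case using fo_self[OF x] by (metis prod.collapse)
  next
    case (step y y')
    then obtain b where "(y, b) \<in> ?O" by auto
    moreover have "(y, y') \<in> D" using step(2) by (simp add: D_iff)
    ultimately have "(y, y') \<in> ?O" using rc_claim1[OF x rc] by blast
    hence "(y', y) \<in> ?O" using rc by (simp add: revclosed_def)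
    thus ?case by blast
  qed
  thus ?thesis using rc_claim1[OF x rc _ wz] by blast
qed

end

context rotsys begin

definition K :: "('a \<times> 'a) set" where
  "K = {(a, b). (a, b) \<in> D \<and> (\<exists>w\<in>V. adj a w \<and> w \<noteq> b) \<and> (\<exists>w\<in>V. adj b w \<and> w \<noteq> a)}"

lemma nrc_reach:
  assumes x: "x \<in> D" and uv: "(u, v) \<in> face_orbit \<sigma> x" and vu: "(v, u) \<notin> face_orbit \<sigma> x"
  shows "(\<lambda>a b. ((a, b) \<in> face_orbit \<sigma> x \<and> (a, b) \<noteq> (u, v)) \<or>
               ((b, a) \<in> face_orbit \<sigma> x \<and> (b, a) \<noteq> (u, v)))\<^sup>*\<^sup>* v u"
    (is "?R\<^sup>*\<^sup>* v u")
proof -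
  let ?O = "face_orbit \<sigma> x"
  define y0 where "y0 = (u, v)"
  have y0D: "y0 \<in> D" using uv fo_sub[OF x] y0_def by blast
  have Oeq: "?O = face_orbit \<sigma> y0" using fo_same[OF x] uv y0_def by simp
  have Oeq2: "?O = orbit f y0" using Oeq fo_eq[OF y0D] by simp
  have inO: "(f ^^ k) y0 \<in> ?O" for k
    unfolding Oeq2 by (rule funpow_in_orbit[OF permutation_self_in_orbit[OF f_perm]])
  obtain n where n: "n > 0" "(f ^^ n) y0 = y0"
    using permutation_self[OF f_perm, of y0] by blast
  define P where "P = (\<lambda>n. 0 < n \<and> (f ^^ n) y0 = y0)"
  define n0 where "n0 = Least P"
  have "P n" using n P_def by simp
  hence "P n0" unfolding n0_def by (rule LeastI)
  hence n0: "0 < n0" "(f ^^ n0) y0 = y0" unfolding P_def by auto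
  have less: "(f ^^ k) y0 \<noteq> y0" if "0 < k" "k < n0" for k
  proof -
    have "\<not> P k" using not_less_Least[of k P] that(2) n0_def by simp
    thus ?thesis using that(1) P_def by simp
  qed
  have fst1: "fst ((f ^^ Suc 0) y0) = v"
  proof -
    have "(v, u) \<in> D" using y0D y0_def D_swap by simp
    hence "fst (\<sigma> (v, u)) = v" using sigma_fst[of "(v, u)"] by simp
    moreover have "(f ^^ Suc 0) y0 = \<sigma> (v, u)" using y0D y0_def by (simp add: gp_def face_perm_def)
    ultimately show ?thesis by simp
  qed
  have main: "?R\<^sup>*\<^sup>* v (fst ((f ^^ k) y0))" if "1 \<le> k" "k \<le> n0" for k
    using that
  proof (induction k)
    case 0 then show ?case by simp
  next
    case (Suc k)
    show ?case
    proof (cases "k = 0")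
      case True
      have "?R\<^sup>*\<^sup>* v v" by (rule rtranclp.rtrancl_refl)
      thus ?thesis using True fst1 by simp
    next
      case False
      define d where "d = (f ^^ k) y0"
      have k1: "1 \<le> k" "k \<le> n0" using False Suc.prems by auto
      have IH: "?R\<^sup>*\<^sup>* v (fst d)" using Suc.IH[OF k1] unfolding d_def .
      have dO: "d \<in> ?O" using inO d_def by simp
      have dD: "d \<in> D" using dO fo_sub[OF x] by blast
      have dne: "d \<noteq> y0" using less[of k] False Suc.prems d_def by simp
      obtain p q where pq: "d = (p, q)" by fastforce
      have "(q, p) \<in> D" using dD D_swap pq by simp
      hence "fst (\<sigma> (q, p)) = q" using sigma_fst[of "(q, p)"] by simp
      hence fst_fd: "fst (f d) = q"
        using dD pq by (simp add: gp_def face_perm_def)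
      have "(p, q) \<in> ?O" "(p, q) \<noteq> (u, v)" using dO dne pq y0_def by auto
      hence "?R p q" by blast
      hence "?R (fst d) (snd d)" using pq by simp
      from rtranclp.rtrancl_into_rtrancl[OF IH this] have "?R\<^sup>*\<^sup>* v (snd d)" .
      moreover have "fst ((f ^^ Suc k) y0) = snd d" using fst_fd pq d_def by simp
      ultimately show ?thesis by simp
    qed
  qed
  have "?R\<^sup>*\<^sup>* v (fst ((f ^^ n0) y0))" using main[of n0] n0(1) by simp
  thus ?thesis using n0 y0_def by simp
qed

lemma cyc_core:
  assumes dc: "distinct c" and L: "3 \<le> length c" and sub: "set c \<subseteq> V"
    and cyc: "\<And>j. j < length c \<Longrightarrow> adj (c ! j) (c ! (Suc j mod length c))"
    and i: "i < length c - 1"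
  shows "(c ! i, c ! Suc i) \<in> K"
proof -
  let ?L = "length c"
  have inV: "j < ?L \<Longrightarrow> c ! j \<in> V" for j using sub by auto
  have e1: "adj (c ! i) (c ! Suc i)" using cyc[of i] i by simp
  define pv where "pv = (i + ?L - 1) mod ?L"
  have pvl: "pv < ?L" using L unfolding pv_def by (intro mod_less_divisor) linarith
  have "Suc pv mod ?L = i"
  proof (cases i)
    case 0
    have "Suc (?L - Suc 0) = ?L" using L by simp
    then show ?thesis using 0 L pv_def by simp
  next
    case (Suc i') then show ?thesis using L pv_def i by simp
  qed
  hence e2: "adj (c ! i) (c ! pv)" using cyc[OF pvl] symm by simp
  have "pv \<noteq> Suc i"
  proof (cases i)
    case 0 then show ?thesis using L pv_def by simp
  next
    case (Suc i') then show ?thesis using L pv_def i by simp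
  qed
  hence n2: "c ! pv \<noteq> c ! Suc i" using dc pvl i by (simp add: nth_eq_iff_index_eq)
  define nx where "nx = Suc (Suc i) mod ?L"
  have nxl: "nx < ?L" using L unfolding nx_def by (intro mod_less_divisor) linarith
  have e3: "adj (c ! Suc i) (c ! nx)" using cyc[of "Suc i"] i nx_def by simp
  have "nx \<noteq> i"
  proof (cases "Suc (Suc i) < ?L")
    case True then show ?thesis using nx_def by simp
  next
    case False
    hence "Suc (Suc i) = ?L" using i by simp
    then show ?thesis using nx_def L by simp
  qed
  hence n3: "c ! nx \<noteq> c ! i" using dc nxl i by (simp add: nth_eq_iff_index_eq)
  have d: "(c ! i, c ! Suc i) \<in> D" using e1 inV[of i] inV[of "Suc i"] i by (simp add: D_iff)
  have w1: "\<exists>w\<in>V. adj (c ! i) w \<and> w \<noteq> c ! Suc i" using e2 n2 inV[OF pvl] by blast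
  have w2: "\<exists>w\<in>V. adj (c ! Suc i) w \<and> w \<noteq> c ! i" using e3 n3 inV[OF nxl] by blast
  show ?thesis using d w1 w2 by (simp add: K_def)
qed

lemma K_swap: "(a, b) \<in> K \<Longrightarrow> (b, a) \<in> K"
  unfolding K_def using D_swap by auto

lemma nrc_witness:
  assumes x: "x \<in> D" and nrc: "\<not> revclosed (face_orbit \<sigma> x)"
  shows "\<exists>ps. distinct ps \<and> 3 \<le> length ps \<and> set ps \<subseteq> V \<and> successively adj (ps @ [hd ps]) \<and>
     (last ps, hd ps) \<in> face_orbit \<sigma> x \<and> length ps - 1 \<le> card (face_orbit \<sigma> x \<inter> K)"
proof -
  let ?O = "face_orbit \<sigma> x"
  obtain u v where uv: "(u, v) \<in> ?O" and vu: "(v, u) \<notin> ?O"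
    using nrc by (auto simp: revclosed_def)
  let ?R = "\<lambda>a b. ((a, b) \<in> ?O \<and> (a, b) \<noteq> (u, v)) \<or> ((b, a) \<in> ?O \<and> (b, a) \<noteq> (u, v))"
  have OD: "?O \<subseteq> D" using fo_sub[OF x] .
  have Radj: "?R a b \<Longrightarrow> adj a b \<and> a \<in> V \<and> b \<in> V" for a b
    using OD symm by (auto simp: D_iff)
  have uvD: "(u, v) \<in> D" using uv OD by blast
  obtain ps where ps: "ps \<noteq> []" "hd ps = v" "last ps = u" "successively ?R ps" "distinct ps"
    using path_exists[OF nrc_reach[OF x uv vu]] by blast
  let ?L = "length ps"
  have uv_ne: "u \<noteq> v" using uvD irr by (auto simp: D_iff)
  have L3: "3 \<le> ?L"
  proof (rule ccontr)
    assume "\<not> 3 \<le> ?L"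
    moreover have "?L \<noteq> 0" using ps(1) by simp
    ultimately have "?L = 1 \<or> ?L = 2" by linarith
    thus False
    proof
      assume "?L = 1"
      then obtain a where "ps = [a]" by (cases ps) auto
      thus False using ps uv_ne by simp
    next
      assume "?L = 2"
      then obtain a b where "ps = [a, b]" by (auto simp: length_Suc_conv numeral_2_eq_2)
      hence "hd ps = a" "last ps = b" "successively ?R ps" using ps by auto
      hence "?R v u" using ps(2,3) \<open>ps = [a, b]\<close> by simp
      thus False using uv vu by blast
    qed
  qed
  have Rn: "i < ?L - 1 \<Longrightarrow> ?R (ps ! i) (ps ! Suc i)" for i
    using successively_nth[OF ps(4)] by simp
  have sub: "set ps \<subseteq> V"
  proof
    fix a assume "a \<in> set ps"
    then obtain i where i: "i < ?L" "ps ! i = a" by (auto simp: in_set_conv_nth)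
    show "a \<in> V"
    proof (cases "i < ?L - 1")
      case True then show ?thesis using Rn[OF True] Radj i by blast
    next
      case False
      hence i1: "i - 1 < ?L - 1" "Suc (i - 1) = i" using i L3 by auto
      have "?R (ps ! (i - 1)) (ps ! Suc (i - 1))" using Rn[OF i1(1)] .
      hence "ps ! Suc (i - 1) \<in> V" using Radj by blast
      then show ?thesis using i1(2) i(2) by simp
    qed
  qed
  have succ: "successively adj ps"
    using ps(4) by (rule successively_mono) (use Radj in blast)
  have last_hd: "adj (last ps) (hd ps)" using uvD ps by (simp add: D_iff)
  have succ2: "successively adj (ps @ [hd ps])"
    using succ last_hd ps(1) by (simp add: successively_append_iff)
  have cyc: "adj (ps ! j) (ps ! (Suc j mod ?L))" if j: "j < ?L" for j
  proof (cases "Suc j < ?L")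
    case True then show ?thesis using successively_nth[OF succ True] by simp
  next
    case False
    hence "j = ?L - 1" using j by simp
    thus ?thesis using last_hd ps(1) by (simp add: last_conv_nth hd_conv_nth)
  qed
  define e where "e = (\<lambda>i. if (ps ! i, ps ! Suc i) \<in> ?O then (ps ! i, ps ! Suc i) else (ps ! Suc i, ps ! i))"
  have eO: "i < ?L - 1 \<Longrightarrow> e i \<in> ?O" for i using Rn[of i] e_def by auto
  have eK: "e i \<in> K" if i: "i < ?L - 1" for i
  proof -
    have "(ps ! i, ps ! Suc i) \<in> K" using cyc_core[OF ps(5) L3 sub cyc i] .
    moreover have "(ps ! Suc i, ps ! i) \<in> K" using K_swap[OF calculation] .
    ultimately show ?thesis unfolding e_def by simp
  qed
  have inj: "inj_on e {..<?L - 1}"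
  proof (rule inj_onI)
    fix i j assume i: "i \<in> {..<?L - 1}" and j: "j \<in> {..<?L - 1}" and eq: "e i = e j"
    have dj: "(ps ! i = ps ! j \<and> ps ! Suc i = ps ! Suc j) \<or> (ps ! i = ps ! Suc j \<and> ps ! Suc i = ps ! j)"
      using eq e_def by (auto split: if_splits)
    have il: "i < ?L" "Suc i < ?L" and jl: "j < ?L" "Suc j < ?L" using i j by auto
    from dj show "i = j"
    proof
      assume "ps ! i = ps ! j \<and> ps ! Suc i = ps ! Suc j"
      thus "i = j" using nth_eq_iff_index_eq[OF ps(5) il(1) jl(1)] by blast
    next
      assume h: "ps ! i = ps ! Suc j \<and> ps ! Suc i = ps ! j"
      hence "i = Suc j" using nth_eq_iff_index_eq[OF ps(5) il(1) jl(2)] by blast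
      moreover have "Suc i = j" using h nth_eq_iff_index_eq[OF ps(5) il(2) jl(1)] by blast
      ultimately show "i = j" by simp
    qed
  qed
  have "?L - 1 = card (e ` {..<?L - 1})" using card_image[OF inj] by simp
  also have "\<dots> \<le> card (?O \<inter> K)"
  proof (rule card_mono)
    show "finite (?O \<inter> K)" using OD finD finite_subset by blast
    show "e ` {..<?L - 1} \<subseteq> ?O \<inter> K" using eO eK by auto
  qed
  finally have cnt: "?L - 1 \<le> card (?O \<inter> K)" .
  have lh: "(last ps, hd ps) \<in> ?O" using uv ps(2,3) by simp
  show ?thesis
    using ps(5) L3 sub succ2 lh cnt by blast
qed

end

definition cycles :: "'a set \<Rightarrow> ('a \<Rightarrow> 'a \<Rightarrow> bool) \<Rightarrow> nat \<Rightarrow> 'a list set" where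
  "cycles V adj M = {c. distinct c \<and> 3 \<le> length c \<and> length c \<le> M \<and> set c \<subseteq> V \<and> successively adj (c @ [hd c])}"

lemma finite_cycles: "finite V \<Longrightarrow> finite (cycles V adj M)"
  by (rule finite_subset[OF _ finite_lists_length_le[of V M]]) (auto simp: cycles_def)

context rotsys begin

definition ccomp :: "'a \<Rightarrow> 'a set" where
  "ccomp x = {y \<in> V. adjV\<^sup>*\<^sup>* x y}"

lemma partA: "card {Ob \<in> face_orbit \<sigma> ` D. revclosed Ob} + num_isolated V adj \<le> num_components V adj"
proof -
  let ?F = "face_orbit \<sigma> ` D"
  let ?FR = "{Ob \<in> ?F. revclosed Ob}"
  let ?I = "{v \<in> V. \<forall>w\<in>V. \<not> adj v w}"
  let ?C = "{{y \<in> V. adjV\<^sup>*\<^sup>* x y} | x. x \<in> V}"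
  define r where "r = (\<lambda>Ob::('a \<times> 'a) set. SOME y. y \<in> Ob)"
  define h1 where "h1 = (\<lambda>Ob. ccomp (fst (r Ob)))"
  have rO: "r Ob \<in> Ob \<and> r Ob \<in> D \<and> Ob = face_orbit \<sigma> (r Ob)" if Ob: "Ob \<in> ?F" for Ob
  proof -
    obtain x where x: "x \<in> D" "Ob = face_orbit \<sigma> x" using Ob by blast
    hence "x \<in> Ob" using fo_self by simp
    hence "r Ob \<in> Ob" unfolding r_def by (rule someI)
    thus ?thesis using x fo_sub fo_same by blast
  qed
  have comp_iso: "ccomp v = {v}" if "v \<in> ?I" for v
  proof -
    have "adjV\<^sup>*\<^sup>* v y \<Longrightarrow> y = v" for y
      by (erule converse_rtranclpE) (use that in auto)
    thus ?thesis using that by (auto simp: ccomp_def)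
  qed
  have comp_dart: "snd y \<in> ccomp (fst y)" if "y \<in> D" for y
  proof -
    have "adjV (fst y) (snd y)" using that by (cases y) (simp add: D_iff)
    thus ?thesis unfolding ccomp_def by auto
  qed
  have inj1: "inj_on h1 ?FR"
  proof (rule inj_onI)
    fix O1 O2 assume O1: "O1 \<in> ?FR" and O2: "O2 \<in> ?FR" and eq: "h1 O1 = h1 O2"
    have r1: "r O1 \<in> D" "O1 = face_orbit \<sigma> (r O1)" using rO O1 by auto
    have r2: "r O2 \<in> D" "O2 = face_orbit \<sigma> (r O2)" using rO O2 by auto
    have "fst (r O2) \<in> V" using r2 by (cases "r O2") (simp add: D_iff)
    hence "fst (r O2) \<in> ccomp (fst (r O2))" unfolding ccomp_def by simp
    hence "fst (r O2) \<in> ccomp (fst (r O1))" using eq unfolding h1_def by simp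
    hence reach: "adjV\<^sup>*\<^sup>* (fst (r O1)) (fst (r O2))" unfolding ccomp_def by blast
    have rcl: "revclosed (face_orbit \<sigma> (r O1))" using O1 r1 by simp
    have dd: "(fst (r O2), snd (r O2)) \<in> D" using r2(1) by simp
    have "(fst (r O2), snd (r O2)) \<in> face_orbit \<sigma> (r O1)"
      by (rule rc_cover[OF r1(1) rcl reach dd])
    hence "r O2 \<in> face_orbit \<sigma> (r O1)" by simp
    hence "face_orbit \<sigma> (r O2) = face_orbit \<sigma> (r O1)" using fo_same r1(1) by blast
    thus "O1 = O2" using r1 r2 by simp
  qed
  have inj2: "inj_on ccomp ?I"
  proof (rule inj_onI)
    fix a b assume "a \<in> ?I" "b \<in> ?I" "ccomp a = ccomp b"
    hence "{a} = {b}" using comp_iso by metis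
    thus "a = b" by simp
  qed
  have disj: "h1 ` ?FR \<inter> ccomp ` ?I = {}"
  proof (rule ccontr)
    assume "h1 ` ?FR \<inter> ccomp ` ?I \<noteq> {}"
    then obtain Ob v where Ob: "Ob \<in> ?FR" and v: "v \<in> ?I" and eq: "h1 Ob = ccomp v" by blast
    have rD: "r Ob \<in> D" using rO Ob by auto
    have "ccomp (fst (r Ob)) = {v}" using eq comp_iso[OF v] h1_def by simp
    moreover have "snd (r Ob) \<in> ccomp (fst (r Ob))" using comp_dart[OF rD] .
    moreover have "fst (r Ob) \<in> ccomp (fst (r Ob))"
      using rD by (cases "r Ob") (simp add: ccomp_def D_iff)
    moreover have "fst (r Ob) \<noteq> snd (r Ob)" using rD irr by (cases "r Ob") (auto simp: D_iff)
    ultimately show False by (metis singletonD)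
  qed
  have sub: "h1 ` ?FR \<union> ccomp ` ?I \<subseteq> ?C"
  proof -
    have "h1 Ob \<in> ?C" if "Ob \<in> ?FR" for Ob
    proof -
      have "r Ob \<in> D" using rO that by auto
      hence "fst (r Ob) \<in> V" by (cases "r Ob") (simp add: D_iff)
      thus ?thesis unfolding h1_def ccomp_def by blast
    qed
    moreover have "ccomp v \<in> ?C" if "v \<in> ?I" for v
      using that unfolding ccomp_def by blast
    ultimately show ?thesis by blast
  qed
  have "?C = (\<lambda>x. {y \<in> V. adjV\<^sup>*\<^sup>* x y}) ` V" by blast
  hence finC: "finite ?C" using finV by simp
  have finFR: "finite ?FR" by (rule finite_subset[of _ ?F]) (use finD in auto)
  have finI: "finite ?I" by (rule finite_subset[of _ V]) (use finV in auto)
  have "card ?FR + card ?I = card (h1 ` ?FR) + card (ccomp ` ?I)"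
    using card_image[OF inj1] card_image[OF inj2] by simp
  also have "\<dots> = card (h1 ` ?FR \<union> ccomp ` ?I)"
    using card_Un_disjoint[OF finite_imageI[OF finFR] finite_imageI[OF finI] disj] by simp
  also have "\<dots> \<le> card ?C" using card_mono[OF finC sub] .
  finally show ?thesis unfolding num_isolated_def num_components_def .
qed

end

context rotsys begin

lemma partB:
  assumes M: "M > 0"
  shows "real (card {Ob \<in> face_orbit \<sigma> ` D. \<not> revclosed Ob}) \<le> real (card K) / real M + real (card (cycles V adj M))"
proof -
  let ?F = "face_orbit \<sigma> ` D"
  let ?FN = "{Ob \<in> ?F. \<not> revclosed Ob}"
  define P where "P = (\<lambda>Ob ps. distinct ps \<and> 3 \<le> length ps \<and> set ps \<subseteq> V \<and> successively adj (ps @ [hd ps]) \<and>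
     (last ps, hd ps) \<in> Ob \<and> length ps - 1 \<le> card (Ob \<inter> K))"
  define wit where "wit = (\<lambda>Ob. SOME ps. P Ob ps)"
  have witP: "P Ob (wit Ob)" if Ob: "Ob \<in> ?FN" for Ob
  proof -
    obtain x where x: "x \<in> D" "Ob = face_orbit \<sigma> x" using Ob by blast
    have "\<exists>ps. P Ob ps" using nrc_witness[OF x(1)] Ob x(2) unfolding P_def by simp
    thus ?thesis unfolding wit_def by (rule someI_ex)
  qed
  have orb_eq: "Ob = face_orbit \<sigma> y" if "Ob \<in> ?F" "y \<in> Ob" for Ob y
    using that fo_same by blast
  define FS where "FS = {Ob \<in> ?FN. length (wit Ob) \<le> M}"
  define FL where "FL = {Ob \<in> ?FN. \<not> length (wit Ob) \<le> M}"
  have finF: "finite ?F" using finD by simp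
  have finFN: "finite ?FN" by (rule finite_subset[OF _ finF]) auto
  have finFS: "finite FS" by (rule finite_subset[OF _ finFN]) (auto simp: FS_def)
  have finFL: "finite FL" by (rule finite_subset[OF _ finFN]) (auto simp: FL_def)
  have split: "card ?FN = card FS + card FL"
  proof -
    have "?FN = FS \<union> FL" "FS \<inter> FL = {}" by (auto simp: FS_def FL_def)
    thus ?thesis using card_Un_disjoint[OF finFS finFL] by simp
  qed
  have S: "card FS \<le> card (cycles V adj M)"
  proof -
    have inj: "inj_on wit FS"
    proof (rule inj_onI)
      fix O1 O2 assume O1: "O1 \<in> FS" and O2: "O2 \<in> FS" and eq: "wit O1 = wit O2"
      let ?y = "(last (wit O1), hd (wit O1))"
      have "?y \<in> O1" using witP O1 unfolding FS_def P_def by blast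
      hence e1: "O1 = face_orbit \<sigma> ?y" using orb_eq O1 unfolding FS_def by blast
      have "?y \<in> O2" using witP O2 eq unfolding FS_def P_def by (metis (no_types, lifting) mem_Collect_eq)
      hence e2: "O2 = face_orbit \<sigma> ?y" using orb_eq O2 unfolding FS_def by blast
      show "O1 = O2" using e1 e2 by simp
    qed
    have "wit ` FS \<subseteq> cycles V adj M"
    proof
      fix c assume "c \<in> wit ` FS"
      then obtain Ob where Ob: "Ob \<in> FS" "c = wit Ob" by blast
      have "P Ob c" using witP Ob unfolding FS_def by blast
      moreover have "length c \<le> M" using Ob unfolding FS_def by blast
      ultimately show "c \<in> cycles V adj M" unfolding P_def cycles_def by blast
    qed
    hence "card (wit ` FS) \<le> card (cycles V adj M)"
      by (rule card_mono[OF finite_cycles[OF finV]])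
    thus ?thesis using card_image[OF inj] by simp
  qed
  have L: "card FL * M \<le> card K"
  proof -
    have each: "M \<le> card (Ob \<inter> K)" if Ob: "Ob \<in> FL" for Ob
    proof -
      have "P Ob (wit Ob)" using witP Ob unfolding FL_def by blast
      hence "length (wit Ob) - 1 \<le> card (Ob \<inter> K)" unfolding P_def by blast
      moreover have "M < length (wit Ob)" using Ob unfolding FL_def by simp
      ultimately show ?thesis by linarith
    qed
    have disj: "\<forall>i\<in>FL. \<forall>j\<in>FL. i \<noteq> j \<longrightarrow> (i \<inter> K) \<inter> (j \<inter> K) = {}"
    proof (intro ballI impI)
      fix i j assume i: "i \<in> FL" and j: "j \<in> FL" and ne: "i \<noteq> j"
      show "(i \<inter> K) \<inter> (j \<inter> K) = {}"
      proof (rule ccontr)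
        assume "(i \<inter> K) \<inter> (j \<inter> K) \<noteq> {}"
        then obtain y where y: "y \<in> i" "y \<in> j" by blast
        have "i = face_orbit \<sigma> y" using orb_eq i y(1) unfolding FL_def by blast
        moreover have "j = face_orbit \<sigma> y" using orb_eq j y(2) unfolding FL_def by blast
        ultimately show False using ne by simp
      qed
    qed
    have finK: "finite K" by (rule finite_subset[OF _ finD]) (auto simp: K_def)
    have "card FL * M = (\<Sum>Ob\<in>FL. M)" by simp
    also have "\<dots> \<le> (\<Sum>Ob\<in>FL. card (Ob \<inter> K))" by (rule sum_mono) (rule each)
    also have "\<dots> = card (\<Union>Ob\<in>FL. Ob \<inter> K)"
      by (rule card_UN_disjoint[symmetric]) (use finFL finK disj in auto)
    also have "\<dots> \<le> card K" by (rule card_mono[OF finK]) auto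
    finally show ?thesis .
  qed
  have "real (card FL) \<le> real (card K) / real M"
    using L M by (simp add: field_simps) (metis of_nat_le_iff of_nat_mult)
  thus ?thesis using split S by simp
qed

lemma faces_bound:
  assumes M: "M > 0"
  shows "real (num_faces_rot V adj \<sigma>) + real (num_isolated V adj) \<le>
         real (num_components V adj) + real (card K) / real M + real (card (cycles V adj M))"
proof -
  let ?F = "face_orbit \<sigma> ` D"
  have finF: "finite ?F" using finD by simp
  have "card ?F = card {Ob \<in> ?F. revclosed Ob} + card {Ob \<in> ?F. \<not> revclosed Ob}"
  proof -
    have "?F = {Ob \<in> ?F. revclosed Ob} \<union> {Ob \<in> ?F. \<not> revclosed Ob}" by blast
    moreover have "finite {Ob \<in> ?F. revclosed Ob}" "finite {Ob \<in> ?F. \<not> revclosed Ob}" using finF by auto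
    ultimately show ?thesis using card_Un_disjoint by (metis (no_types, lifting) disjoint_iff mem_Collect_eq)
  qed
  thus ?thesis using partA partB[OF M] unfolding num_faces_rot_def by linarith
qed

end

lemma rotation_exists:
  assumes finV: "finite V"
  shows "\<exists>\<sigma>. rotation_system V adj \<sigma>"
proof -
  let ?D = "darts V adj"
  have finD: "finite ?D"
    by (rule finite_subset[of _ "V \<times> V"]) (use finV in \<open>auto simp: darts_def\<close>)
  define Da where "Da = (\<lambda>a. {x \<in> ?D. fst x = a})"
  have "\<exists>l. set l = Da a \<and> distinct l" for a
    using finite_distinct_list[of "Da a"] finD unfolding Da_def by auto
  then obtain l where l: "\<And>a. set (l a) = Da a \<and> distinct (l a)" by metis
  define c where "c = (\<lambda>a. cycle_of_list (l a))"
  define \<sigma> where "\<sigma> = (\<lambda>x. c (fst x) x)"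
  have cperm: "c a permutes Da a" for a unfolding c_def using cycle_permutes[of "l a"] l by simp
  have c_in: "x \<in> Da a \<Longrightarrow> c a x \<in> Da a" for x a using cperm by (simp add: permutes_in_image)
  have c_out: "x \<notin> Da a \<Longrightarrow> c a x = x" for x a by (rule permutes_not_in[OF cperm])
  have sig_D: "x \<in> ?D \<Longrightarrow> \<sigma> x \<in> ?D \<and> fst (\<sigma> x) = fst x" for x
    using c_in[of x "fst x"] unfolding \<sigma>_def Da_def by simp
  have sig_out: "x \<notin> ?D \<Longrightarrow> \<sigma> x = x" for x
    using c_out[of x "fst x"] unfolding \<sigma>_def Da_def by simp
  have inj: "inj_on \<sigma> ?D"
  proof (rule inj_onI)
    fix x y assume x: "x \<in> ?D" and y: "y \<in> ?D" and eq: "\<sigma> x = \<sigma> y"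
    have "fst x = fst y" using sig_D[OF x] sig_D[OF y] eq by simp
    hence "c (fst x) x = c (fst x) y" using eq unfolding \<sigma>_def by simp
    thus "x = y" using permutes_inj[OF cperm] by (simp add: inj_eq)
  qed
  have surj: "\<sigma> ` ?D = ?D"
  proof
    show "\<sigma> ` ?D \<subseteq> ?D" using sig_D by blast
    show "?D \<subseteq> \<sigma> ` ?D"
    proof
      fix y assume y: "y \<in> ?D"
      have yD: "y \<in> Da (fst y)" using y Da_def by simp
      obtain z where z: "c (fst y) z = y" using permutes_surj[OF cperm[of "fst y"]] by (metis surjD)
      have zD: "z \<in> Da (fst y)"
      proof (rule ccontr)
        assume "z \<notin> Da (fst y)"
        hence "c (fst y) z = z" using c_out by simp
        hence "z = y" using z by simp
        thus False using \<open>z \<notin> Da (fst y)\<close> yD by simp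
      qed
      hence "fst z = fst y" "z \<in> ?D" unfolding Da_def by auto
      hence "\<sigma> z = y" using z unfolding \<sigma>_def by simp
      thus "y \<in> \<sigma> ` ?D" using \<open>z \<in> ?D\<close> by blast
    qed
  qed
  have perm: "\<sigma> permutes ?D"
    by (rule bij_imp_permutes) (use inj surj sig_out in \<open>auto simp: bij_betw_def\<close>)
  have iter: "(\<sigma> ^^ k) x = (c (fst x) ^^ k) x" if x: "x \<in> ?D" for x k
  proof (induction k)
    case 0 then show ?case by simp
  next
    case (Suc k)
    have xa: "x \<in> Da (fst x)" using x Da_def by simp
    have "(c (fst x) ^^ k) x \<in> Da (fst x)"
      by (rule permutes_in_funpow_image[OF cperm xa])
    hence "fst ((c (fst x) ^^ k) x) = fst x" unfolding Da_def by simp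
    thus ?case using Suc by (simp add: \<sigma>_def)
  qed
  have trans: "\<exists>k. (\<sigma> ^^ k) x = y" if x: "x \<in> ?D" and y: "y \<in> ?D" and eq: "fst x = fst y" for x y
  proof -
    let ?a = "fst x"
    let ?n = "length (l ?a)"
    have "x \<in> set (l ?a)" "y \<in> set (l ?a)" using x y eq l Da_def by auto
    then obtain i j where i: "i < ?n" "l ?a ! i = x" and j: "j < ?n" "l ?a ! j = y"
      by (auto simp: in_set_conv_nth)
    define k where "k = ?n - i + j"
    have "map (c ?a ^^ k) (l ?a) = rotate k (l ?a)"
      unfolding c_def using cyclic_rotation l by blast
    hence "(c ?a ^^ k) x = rotate k (l ?a) ! i" using i by (metis nth_map)
    also have "\<dots> = l ?a ! ((k + i) mod ?n)" using i by (simp add: nth_rotate)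
    also have "(k + i) mod ?n = j"
    proof -
      have "k + i = j + ?n" using i unfolding k_def by simp
      thus ?thesis using j by simp
    qed
    finally have "(c ?a ^^ k) x = y" using j by simp
    thus ?thesis using iter[OF x] by metis
  qed
  have "rotation_system V adj \<sigma>"
    unfolding rotation_system_def using perm sig_D trans by blast
  thus ?thesis by blast
qed

lemma finite_rotations:
  assumes "finite V"
  shows "finite {\<sigma>. rotation_system V adj \<sigma>}"
proof -
  have "finite (darts V adj)"
    by (rule finite_subset[of _ "V \<times> V"]) (use assms in \<open>auto simp: darts_def\<close>)
  hence "finite {\<sigma>. \<sigma> permutes darts V adj}" by (rule finite_permutations)
  thus ?thesis by (rule finite_subset[rotated]) (auto simp: rotation_system_def)
qed

definition coreD :: "'a set \<Rightarrow> ('a \<Rightarrow> 'a \<Rightarrow> bool) \<Rightarrow> ('a \<times> 'a) set" where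
  "coreD V adj = {(a, b). (a, b) \<in> darts V adj \<and> (\<exists>w\<in>V. adj a w \<and> w \<noteq> b) \<and> (\<exists>w\<in>V. adj b w \<and> w \<noteq> a)}"

lemma mgf_bound:
  assumes finV: "finite V" and symm: "\<And>a b. adj a b = adj b a" and irr: "\<And>a. \<not> adj a a"
    and M: "M > 0"
  shows "real_of_int (min_genus_faces V adj) \<le>
           1 + real (card (coreD V adj)) / real M + real (card (cycles V adj M))"
proof -
  let ?S = "num_faces_rot V adj ` {\<sigma>. rotation_system V adj \<sigma>}"
  obtain \<sigma>0 where s0: "rotation_system V adj \<sigma>0" using rotation_exists[of V adj, OF finV] by blast
  have "finite ?S" using finite_rotations[OF finV] by simp
  moreover have "?S \<noteq> {}" using s0 by blast
  ultimately have "Max ?S \<in> ?S" by (rule Max_in)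
  then obtain \<sigma> where s: "rotation_system V adj \<sigma>" and mx: "max_faces_rot V adj = num_faces_rot V adj \<sigma>"
    unfolding max_faces_rot_def by blast
  interpret rotsys V adj \<sigma> using finV symm irr s by unfold_locales auto
  have KK: "K = coreD V adj" unfolding K_def coreD_def by simp
  have "real (num_faces_rot V adj \<sigma>) + real (num_isolated V adj) \<le>
         real (num_components V adj) + real (card K) / real M + real (card (cycles V adj M))"
    by (rule faces_bound[OF M])
  thus ?thesis unfolding min_genus_faces_def mx KK by simp
qed


abbreviation "PB A p \<equiv> Pi_pmf A False (\<lambda>_. bernoulli_pmf p)"

lemma prob_all_true:
  assumes A: "finite A" and S: "S \<subseteq> A" and p: "0 \<le> p" "p \<le> 1"
  shows "measure_pmf.prob (PB A p) {E. \<forall>e\<in>S. E e} = p ^ card S"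
proof -
  define B where "B = (\<lambda>e. if e \<in> S then {True} else (UNIV :: bool set))"
  have eq: "{E. \<forall>e\<in>S. E e} = Pi A B"
    using S by (auto simp: B_def Pi_def)
  have "measure_pmf.prob (PB A p) (Pi A B) = (\<Prod>x\<in>A. measure_pmf.prob (bernoulli_pmf p) (B x))"
    by (rule measure_Pi_pmf_Pi[OF A])
  also have "\<dots> = (\<Prod>x\<in>A. if x \<in> S then p else 1)"
    by (rule prod.cong) (use p in \<open>auto simp: B_def measure_pmf_single\<close>)
  also have "\<dots> = (\<Prod>x\<in>S. p)"
    using prod.If_cases[OF A, of "\<lambda>x. x \<in> S" "\<lambda>_. p" "\<lambda>_. 1"] S
    by (simp add: Int_absorb1 Int_commute)
  also have "\<dots> = p ^ card S" by simp
  finally show ?thesis using eq by simp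
qed

lemma exp_count:
  assumes A: "finite A" and U: "finite U" and p: "0 \<le> p" "p \<le> 1"
    and S: "\<And>u. u \<in> U \<Longrightarrow> S u \<subseteq> A"
  shows "measure_pmf.expectation (PB A p) (\<lambda>E. real (card {u\<in>U. \<forall>e\<in>S u. E e})) =
         (\<Sum>u\<in>U. p ^ card (S u))"
proof -
  have fin: "finite (set_pmf (PB A p))"
    using A by (simp add: set_Pi_pmf finite_PiE_dflt)
  have cardsum: "real (card {u\<in>U. \<forall>e\<in>S u. E e}) = (\<Sum>u\<in>U. indicator {E. \<forall>e\<in>S u. E e} E)" for E
  proof -
    have "real (card {u\<in>U. \<forall>e\<in>S u. E e}) = (\<Sum>u\<in>{u\<in>U. \<forall>e\<in>S u. E e}. 1)" by simp
    also have "\<dots> = (\<Sum>u\<in>U. if \<forall>e\<in>S u. E e then 1 else 0)"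
      by (rule sum.inter_filter[OF U])
    also have "\<dots> = (\<Sum>u\<in>U. indicator {E. \<forall>e\<in>S u. E e} E)"
      by (rule sum.cong) (auto simp: indicator_def)
    finally show ?thesis .
  qed
  have "measure_pmf.expectation (PB A p) (\<lambda>E. real (card {u\<in>U. \<forall>e\<in>S u. E e})) =
        measure_pmf.expectation (PB A p) (\<lambda>E. \<Sum>u\<in>U. indicator {E. \<forall>e\<in>S u. E e} E)"
    using cardsum by simp
  also have "\<dots> = (\<Sum>u\<in>U. measure_pmf.expectation (PB A p) (indicator {E. \<forall>e\<in>S u. E e}))"
    by (rule Bochner_Integration.integral_sum) (rule integrable_measure_pmf_finite[OF fin])
  also have "\<dots> = (\<Sum>u\<in>U. p ^ card (S u))"
    by (rule sum.cong) (use prob_all_true[OF A S p] in auto)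
  finally show ?thesis .
qed


lemma succ_cyc:
  assumes "c \<noteq> []"
  shows "successively R (c @ [hd c]) \<longleftrightarrow> (\<forall>i<length c. R (c ! i) (c ! (Suc i mod length c)))"
proof -
  let ?L = "length c"
  have L: "?L > 0" using assms by simp
  have "successively R (c @ [hd c]) \<longleftrightarrow> (\<forall>i. Suc i < length (c @ [hd c]) \<longrightarrow> R ((c @ [hd c]) ! i) ((c @ [hd c]) ! Suc i))"
    by (simp add: successively_conv_nth)
  also have "\<dots> \<longleftrightarrow> (\<forall>i<?L. R (c ! i) (c ! (Suc i mod ?L)))"
  proof (intro iffI allI impI)
    fix i assume h: "\<forall>i. Suc i < length (c @ [hd c]) \<longrightarrow> R ((c @ [hd c]) ! i) ((c @ [hd c]) ! Suc i)" and i: "i < ?L"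
    have hi: "R ((c @ [hd c]) ! i) ((c @ [hd c]) ! Suc i)" using h i by simp
    show "R (c ! i) (c ! (Suc i mod ?L))"
    proof (cases "Suc i < ?L")
      case True thus ?thesis using hi i by (simp add: nth_append)
    next
      case False
      hence "Suc i = ?L" using i by simp
      thus ?thesis using hi i assms by (simp add: nth_append hd_conv_nth)
    qed
  next
    fix i assume h: "\<forall>i<?L. R (c ! i) (c ! (Suc i mod ?L))" and i: "Suc i < length (c @ [hd c])"
    hence i': "i < ?L" by simp
    have hi: "R (c ! i) (c ! (Suc i mod ?L))" using h i' by simp
    show "R ((c @ [hd c]) ! i) ((c @ [hd c]) ! Suc i)"
    proof (cases "Suc i < ?L")
      case True thus ?thesis using hi i' by (simp add: nth_append)
    next
      case False
      hence "Suc i = ?L" using i' by simp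
      thus ?thesis using hi i' assms by (simp add: nth_append hd_conv_nth)
    qed
  qed
  finally show ?thesis .
qed

lemma alt_parity:
  assumes alt: "\<forall>i<length c. isl (c ! i) \<noteq> isl (c ! (Suc i mod length c))"
  shows "i < length c \<Longrightarrow> isl (c ! i) = (if even i then isl (c ! 0) else \<not> isl (c ! 0))"
proof (induction i)
  case 0 then show ?case by simp
next
  case (Suc i)
  hence "i < length c" by simp
  hence "isl (c ! i) \<noteq> isl (c ! Suc i)" using alt Suc.prems by auto
  thus ?case using Suc by auto
qed

lemma alt_even:
  assumes alt: "\<forall>i<length c. isl (c ! i) \<noteq> isl (c ! (Suc i mod length c))" and ne: "c \<noteq> []"
  shows "even (length c)"
proof (rule ccontr)
  let ?L = "length c"
  assume odd: "\<not> even ?L"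
  have l: "?L - 1 < ?L" using ne by simp
  have "Suc (?L - 1) mod ?L = 0" using ne by simp
  hence "isl (c ! (?L - 1)) \<noteq> isl (c ! 0)" using alt l by metis
  moreover have "even (?L - 1)" using odd ne by simp
  ultimately show False using alt_parity[OF alt l] by simp
qed

lemma card_lists_nth:
  fixes B :: "nat \<Rightarrow> 'a set"
  assumes fin: "\<And>i. i < L \<Longrightarrow> finite (B i)"
  shows "card {xs. length xs = L \<and> (\<forall>i<L. xs ! i \<in> B i)} \<le> (\<Prod>i<L. card (B i))"
proof -
  let ?X = "{xs. length xs = L \<and> (\<forall>i<L. xs ! i \<in> B i)}"
  define g where "g = (\<lambda>xs::'a list. restrict (\<lambda>i. xs ! i) {..<L})"
  have inj: "inj_on g ?X"
  proof (rule inj_onI)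
    fix xs ys assume xs: "xs \<in> ?X" and ys: "ys \<in> ?X" and eq: "g xs = g ys"
    have "xs ! i = ys ! i" if "i < L" for i
      using fun_cong[OF eq, of i] that by (simp add: g_def)
    thus "xs = ys" using xs ys by (auto intro: nth_equalityI)
  qed
  have sub: "g ` ?X \<subseteq> PiE {..<L} B"
  proof
    fix h assume "h \<in> g ` ?X"
    then obtain xs where xs: "xs \<in> ?X" "h = g xs" by blast
    show "h \<in> PiE {..<L} B" unfolding xs(2) g_def using xs(1) by (auto simp: PiE_def extensional_def)
  qed
  have finP: "finite (PiE {..<L} B)" by (rule finite_PiE) (use fin in auto)
  have "card ?X = card (g ` ?X)" using card_image[OF inj] by simp
  also have "\<dots> \<le> card (PiE {..<L} B)" by (rule card_mono[OF finP sub])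
  also have "\<dots> = (\<Prod>i<L. card (B i))" by (rule card_PiE) simp
  finally show ?thesis .
qed

lemma prod_alt: "(\<Prod>i<2 * j. (if even i then (a::nat) else b)) = a ^ j * b ^ j"
proof (induction j)
  case 0 then show ?case by simp
next
  case (Suc j)
  have "{..<2 * Suc j} = insert (Suc (2 * j)) (insert (2 * j) {..<2 * j})" by auto
  hence "(\<Prod>i<2 * Suc j. (if even i then a else b)) =
         b * (a * (\<Prod>i<2 * j. (if even i then a else b)))" by simp
  thus ?case using Suc by simp
qed


fun eidx :: "nat + nat \<Rightarrow> nat + nat \<Rightarrow> nat \<times> nat" where
  "eidx (Inl i) (Inr j) = (i, j)"
| "eidx (Inr j) (Inl i) = (i, j)"
| "eidx _ _ = (0, 0)"

lemma bip_adj_iff: "bip_adj E x y \<longleftrightarrow> isl x \<noteq> isl y \<and> E (eidx x y)"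
  by (cases x; cases y) auto

lemma bip_symm: "bip_adj E a b = bip_adj E b a"
  by (cases a; cases b) auto

lemma bip_irr: "\<not> bip_adj E a a"
  by (cases a) auto

lemma bip_verts_iff: "x \<in> bip_verts n1 n2 \<longleftrightarrow> (case x of Inl a \<Rightarrow> a < n1 | Inr b \<Rightarrow> b < n2)"
  by (cases x) (auto simp: bip_verts_def)

lemma finite_bip_verts: "finite (bip_verts n1 n2)"
  by (simp add: bip_verts_def)

lemma eidx_inj:
  assumes "isl x \<noteq> isl y" "isl x' \<noteq> isl y'" "eidx x y = eidx x' y'"
  shows "(x = x' \<and> y = y') \<or> (x = y' \<and> y = x')"
  using assms by (cases x; cases y; cases x'; cases y') auto

lemma eidx_range:
  assumes "isl x \<noteq> isl y" "x \<in> bip_verts n1 n2" "y \<in> bip_verts n1 n2"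
  shows "eidx x y \<in> {..<n1} \<times> {..<n2}"
  using assms by (cases x; cases y) (auto simp: bip_verts_iff)

definition Ualt :: "nat \<Rightarrow> nat \<Rightarrow> nat \<Rightarrow> (nat + nat) list set" where
  "Ualt n1 n2 M = {c. distinct c \<and> 3 \<le> length c \<and> length c \<le> M \<and> set c \<subseteq> bip_verts n1 n2 \<and>
      (\<forall>i<length c. isl (c ! i) \<noteq> isl (c ! (Suc i mod length c)))}"

definition Sc :: "(nat + nat) list \<Rightarrow> (nat \<times> nat) set" where
  "Sc c = (\<lambda>i. eidx (c ! i) (c ! (Suc i mod length c))) ` {..<length c}"

lemma finite_Ualt: "finite (Ualt n1 n2 M)"
  by (rule finite_subset[OF _ finite_lists_length_le[OF finite_bip_verts, of n1 n2 M]])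
     (auto simp: Ualt_def)

lemma cycles_eq:
  "cycles (bip_verts n1 n2) (bip_adj E) M = {c \<in> Ualt n1 n2 M. \<forall>e\<in>Sc c. E e}"
proof (intro set_eqI iffI)
  fix c assume c: "c \<in> cycles (bip_verts n1 n2) (bip_adj E) M"
  hence ne: "c \<noteq> []" by (auto simp: cycles_def)
  have "\<forall>i<length c. bip_adj E (c ! i) (c ! (Suc i mod length c))"
    using c succ_cyc[OF ne] by (simp add: cycles_def)
  thus "c \<in> {c \<in> Ualt n1 n2 M. \<forall>e\<in>Sc c. E e}"
    using c by (auto simp: cycles_def Ualt_def Sc_def bip_adj_iff)
next
  fix c assume c: "c \<in> {c \<in> Ualt n1 n2 M. \<forall>e\<in>Sc c. E e}"
  hence ne: "c \<noteq> []" by (auto simp: Ualt_def)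
  have "\<forall>i<length c. bip_adj E (c ! i) (c ! (Suc i mod length c))"
    using c by (auto simp: Ualt_def Sc_def bip_adj_iff)
  thus "c \<in> cycles (bip_verts n1 n2) (bip_adj E) M"
    using c succ_cyc[OF ne] by (simp add: cycles_def Ualt_def)
qed

lemma Sc_sub: "c \<in> Ualt n1 n2 M \<Longrightarrow> Sc c \<subseteq> {..<n1} \<times> {..<n2}"
proof
  fix e assume c: "c \<in> Ualt n1 n2 M" and e: "e \<in> Sc c"
  then obtain i where i: "i < length c" "e = eidx (c ! i) (c ! (Suc i mod length c))"
    by (auto simp: Sc_def)
  have "Suc i mod length c < length c" by (rule mod_less_divisor) (use i in linarith)
  hence "c ! (Suc i mod length c) \<in> bip_verts n1 n2" using c by (auto simp: Ualt_def)
  moreover have "c ! i \<in> bip_verts n1 n2" using c i by (auto simp: Ualt_def)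
  moreover have "isl (c ! i) \<noteq> isl (c ! (Suc i mod length c))" using c i by (auto simp: Ualt_def)
  ultimately show "e \<in> {..<n1} \<times> {..<n2}" using eidx_range i by metis
qed

lemma card_Sc: assumes c: "c \<in> Ualt n1 n2 M" shows "card (Sc c) = length c"
proof -
  let ?L = "length c"
  define nx where "nx = (\<lambda>i. Suc i mod ?L)"
  have L3: "3 \<le> ?L" and dc: "distinct c" and alt: "\<forall>i<?L. isl (c ! i) \<noteq> isl (c ! nx i)"
    using c by (auto simp: Ualt_def nx_def)
  have nxl: "nx i < ?L" for i unfolding nx_def by (rule mod_less_divisor) (use L3 in linarith)
  have nx_eq: "nx i = (if Suc i < ?L then Suc i else 0)" if i: "i < ?L" for i
  proof (cases "Suc i < ?L")
    case True thus ?thesis by (simp add: nx_def)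
  next
    case False
    hence "Suc i = ?L" using i by simp
    thus ?thesis by (simp add: nx_def)
  qed
  have inj: "inj_on (\<lambda>i. eidx (c ! i) (c ! nx i)) {..<?L}"
  proof (rule inj_onI)
    fix i j assume i: "i \<in> {..<?L}" and j: "j \<in> {..<?L}" and eq: "eidx (c ! i) (c ! nx i) = eidx (c ! j) (c ! nx j)"
    have "(c ! i = c ! j \<and> c ! nx i = c ! nx j) \<or> (c ! i = c ! nx j \<and> c ! nx i = c ! j)"
      using eidx_inj[OF _ _ eq] alt i j by auto
    thus "i = j"
    proof
      assume "c ! i = c ! j \<and> c ! nx i = c ! nx j"
      thus "i = j" using nth_eq_iff_index_eq[OF dc] i j by blast
    next
      assume h: "c ! i = c ! nx j \<and> c ! nx i = c ! j"
      have il: "i < ?L" and jl: "j < ?L" using i j by auto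
      have a: "i = nx j" using h nth_eq_iff_index_eq[OF dc il nxl[of j]] by blast
      have b: "nx i = j" using h nth_eq_iff_index_eq[OF dc nxl[of i] jl] by blast
      have a': "i = (if Suc j < ?L then Suc j else 0)" using a nx_eq[OF jl] by simp
      have b': "(if Suc i < ?L then Suc i else 0) = j" using b nx_eq[OF il] by simp
      have "False"
      proof (cases "Suc j < ?L")
        case True
        hence ij: "i = Suc j" using a' by simp
        show False
        proof (cases "Suc i < ?L")
          case True thus False using b' ij by simp
        next
          case False thus False using b' ij L3 by simp
        qed
      next
        case False
        hence "i = 0" using a' by simp
        hence "j = 1" using b' L3 by simp
        thus False using False L3 by simp
      qed
      thus "i = j" ..
    qed
  qed
  have "card (Sc c) = card ((\<lambda>i. eidx (c ! i) (c ! nx i)) ` {..<?L})"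
    by (simp add: Sc_def nx_def)
  also have "\<dots> = ?L" using card_image[OF inj] by simp
  finally show ?thesis .
qed

lemma G_bip_PB: "G_bip n1 n2 p = PB ({..<n1} \<times> {..<n2}) p"
  by (simp add: G_bip_def)

lemma exp_cycles:
  assumes p: "0 \<le> p" "p \<le> 1"
  shows "measure_pmf.expectation (G_bip n1 n2 p) (\<lambda>E. real (card (cycles (bip_verts n1 n2) (bip_adj E) M)))
         = (\<Sum>c\<in>Ualt n1 n2 M. p ^ length c)"
proof -
  have "measure_pmf.expectation (G_bip n1 n2 p) (\<lambda>E. real (card (cycles (bip_verts n1 n2) (bip_adj E) M)))
      = measure_pmf.expectation (PB ({..<n1} \<times> {..<n2}) p) (\<lambda>E. real (card {c \<in> Ualt n1 n2 M. \<forall>e\<in>Sc c. E e}))"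
    by (simp add: G_bip_PB cycles_eq)
  also have "\<dots> = (\<Sum>c\<in>Ualt n1 n2 M. p ^ card (Sc c))"
    by (rule exp_count[OF _ finite_Ualt p Sc_sub]) auto
  also have "\<dots> = (\<Sum>c\<in>Ualt n1 n2 M. p ^ length c)"
    by (rule sum.cong) (auto simp: card_Sc)
  finally show ?thesis .
qed


lemma verts_isl: "x \<in> bip_verts n1 n2 \<Longrightarrow> isl x \<Longrightarrow> x \<in> Inl ` {..<n1}"
  by (cases x) (auto simp: bip_verts_iff)

lemma verts_nisl: "x \<in> bip_verts n1 n2 \<Longrightarrow> \<not> isl x \<Longrightarrow> x \<in> Inr ` {..<n2}"
  by (cases x) (auto simp: bip_verts_iff)

lemma card_UL:
  assumes L: "L = 2 * j"
  shows "card {c \<in> Ualt n1 n2 M. length c = L} \<le> 2 * (n1 ^ j * n2 ^ j)"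
proof -
  let ?U = "{c \<in> Ualt n1 n2 M. length c = L}"
  define B1 where "B1 = (\<lambda>i::nat. if even i then Inl ` {..<n1} else (Inr ` {..<n2} :: (nat + nat) set))"
  define B2 where "B2 = (\<lambda>i::nat. if even i then Inr ` {..<n2} else (Inl ` {..<n1} :: (nat + nat) set))"
  let ?X1 = "{xs. length xs = L \<and> (\<forall>i<L. xs ! i \<in> B1 i)}"
  let ?X2 = "{xs. length xs = L \<and> (\<forall>i<L. xs ! i \<in> B2 i)}"
  have sub: "?U \<subseteq> ?X1 \<union> ?X2"
  proof
    fix c assume c: "c \<in> ?U"
    have cU: "c \<in> Ualt n1 n2 M" and lc: "length c = L" using c by simp_all
    have alt: "\<forall>i<length c. isl (c ! i) \<noteq> isl (c ! (Suc i mod length c))"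
      and sv: "set c \<subseteq> bip_verts n1 n2"
      using cU unfolding Ualt_def mem_Collect_eq by blast+
    have inV: "i < L \<Longrightarrow> c ! i \<in> bip_verts n1 n2" for i using sv lc by auto
    show "c \<in> ?X1 \<union> ?X2"
    proof (cases "isl (c ! 0)")
      case True
      have "c ! i \<in> B1 i" if i: "i < L" for i
      proof -
        have P: "isl (c ! i) = (if even i then isl (c ! 0) else \<not> isl (c ! 0))"
          using alt_parity[OF alt, of i] i lc by simp
        show ?thesis
        proof (cases "even i")
          case True
          hence "isl (c ! i)" using P \<open>isl (c ! 0)\<close> by simp
          thus ?thesis using verts_isl[OF inV[OF i]] True unfolding B1_def by simp
        next
          case False
          hence "\<not> isl (c ! i)" using P \<open>isl (c ! 0)\<close> by simp
          thus ?thesis using verts_nisl[OF inV[OF i]] False unfolding B1_def by simp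
        qed
      qed
      hence "c \<in> ?X1" using lc by simp
      thus ?thesis by (rule UnI1)
    next
      case False
      have "c ! i \<in> B2 i" if i: "i < L" for i
      proof -
        have P: "isl (c ! i) = (if even i then isl (c ! 0) else \<not> isl (c ! 0))"
          using alt_parity[OF alt, of i] i lc by simp
        show ?thesis
        proof (cases "even i")
          case True
          hence "\<not> isl (c ! i)" using P \<open>\<not> isl (c ! 0)\<close> by simp
          thus ?thesis using verts_nisl[OF inV[OF i]] True unfolding B2_def by simp
        next
          case False
          hence "isl (c ! i)" using P \<open>\<not> isl (c ! 0)\<close> by simp
          thus ?thesis using verts_isl[OF inV[OF i]] False unfolding B2_def by simp
        qed
      qed
      hence "c \<in> ?X2" using lc by simp
      thus ?thesis by (rule UnI2)
    qed
  qed
  have cB1: "card (B1 i) = (if even i then n1 else n2)" for i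
    by (simp add: B1_def card_image)
  have cB2: "card (B2 i) = (if even i then n2 else n1)" for i
    by (simp add: B2_def card_image)
  have c1: "card ?X1 \<le> n1 ^ j * n2 ^ j"
  proof -
    have "card ?X1 \<le> (\<Prod>i<L. card (B1 i))" by (rule card_lists_nth) (simp add: B1_def)
    also have "\<dots> = (\<Prod>i<2 * j. (if even i then n1 else n2))" using cB1 L by simp
    also have "\<dots> = n1 ^ j * n2 ^ j" by (rule prod_alt)
    finally show ?thesis .
  qed
  have c2: "card ?X2 \<le> n1 ^ j * n2 ^ j"
  proof -
    have "card ?X2 \<le> (\<Prod>i<L. card (B2 i))" by (rule card_lists_nth) (simp add: B2_def)
    also have "\<dots> = (\<Prod>i<2 * j. (if even i then n2 else n1))" using cB2 L by simp
    also have "\<dots> = n2 ^ j * n1 ^ j" by (rule prod_alt)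
    finally show ?thesis by (simp add: mult.commute)
  qed
  let ?W = "Inl ` {..<n1} \<union> Inr ` {..<n2}"
  have B1W: "B1 i \<subseteq> ?W" for i by (auto simp: B1_def)
  have B2W: "B2 i \<subseteq> ?W" for i by (auto simp: B2_def)
  have finW: "finite {xs. set xs \<subseteq> ?W \<and> length xs \<le> L}" by (rule finite_lists_length_le) simp
  have finX1: "finite ?X1"
  proof (rule finite_subset[OF _ finW], rule subsetI)
    fix xs assume xs: "xs \<in> ?X1"
    have "set xs \<subseteq> ?W"
    proof
      fix a assume "a \<in> set xs"
      then obtain i where "i < length xs" "xs ! i = a" by (auto simp: in_set_conv_nth)
      thus "a \<in> ?W" using xs B1W by blast
    qed
    thus "xs \<in> {xs. set xs \<subseteq> ?W \<and> length xs \<le> L}" using xs by simp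
  qed
  have finX2: "finite ?X2"
  proof (rule finite_subset[OF _ finW], rule subsetI)
    fix xs assume xs: "xs \<in> ?X2"
    have "set xs \<subseteq> ?W"
    proof
      fix a assume "a \<in> set xs"
      then obtain i where "i < length xs" "xs ! i = a" by (auto simp: in_set_conv_nth)
      thus "a \<in> ?W" using xs B2W by blast
    qed
    thus "xs \<in> {xs. set xs \<subseteq> ?W \<and> length xs \<le> L}" using xs by simp
  qed
  have "card ?U \<le> card (?X1 \<union> ?X2)" by (rule card_mono) (use finX1 finX2 sub in auto)
  also have "\<dots> \<le> card ?X1 + card ?X2" by (rule card_Un_le)
  finally show ?thesis using c1 c2 by simp
qed

lemma sum_Ualt:
  assumes p: "0 \<le> p"
  shows "(\<Sum>c\<in>Ualt n1 n2 M. p ^ length c) \<le> (\<Sum>L\<le>M. 2 * (real n1 * real n2 * p ^ 2) ^ (L div 2))"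
proof -
  let ?U = "Ualt n1 n2 M"
  have "(\<Sum>c\<in>?U. p ^ length c) = (\<Sum>L\<in>{..M}. \<Sum>c\<in>{c \<in> ?U. length c = L}. p ^ length c)"
    by (rule sum.group[symmetric, OF finite_Ualt finite_atMost]) (auto simp: Ualt_def)
  also have "\<dots> \<le> (\<Sum>L\<le>M. 2 * (real n1 * real n2 * p ^ 2) ^ (L div 2))"
  proof (rule sum_mono)
    fix L assume "L \<in> {..M}"
    have eq: "(\<Sum>c\<in>{c \<in> ?U. length c = L}. p ^ length c) = real (card {c \<in> ?U. length c = L}) * p ^ L"
      by simp
    show "(\<Sum>c\<in>{c \<in> ?U. length c = L}. p ^ length c) \<le> 2 * (real n1 * real n2 * p ^ 2) ^ (L div 2)"
    proof (cases "even L")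
      case True
      then obtain j where j: "L = 2 * j" by blast
      have "real (card {c \<in> ?U. length c = L}) \<le> 2 * (real n1 ^ j * real n2 ^ j)"
        using card_UL[OF j, of n1 n2 M] by (metis of_nat_le_iff of_nat_mult of_nat_numeral of_nat_power)
      hence "real (card {c \<in> ?U. length c = L}) * p ^ L \<le> 2 * (real n1 ^ j * real n2 ^ j) * p ^ L"
        by (rule mult_right_mono) (use p in simp)
      also have "\<dots> = 2 * (real n1 * real n2 * p ^ 2) ^ (L div 2)"
        using j by (simp add: power_mult_distrib power_mult)
      finally show ?thesis using eq by simp
    next
      case False
      have E0: "{c \<in> ?U. length c = L} = {}"
        using False alt_even by (fastforce simp: Ualt_def)
      have "(\<Sum>c\<in>{c \<in> ?U. length c = L}. p ^ length c) = 0" by (simp only: E0 sum.empty)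
      moreover have "0 \<le> 2 * (real n1 * real n2 * p ^ 2) ^ (L div 2)" by simp
      ultimately show ?thesis by linarith
    qed
  qed
  finally show ?thesis .
qed

definition Tset :: "nat \<Rightarrow> nat \<Rightarrow> (nat \<times> nat \<times> nat) set" where
  "Tset n1 n2 = ({..<n1} \<times> {..<n2} \<times> {..<n1}) \<inter> {u. fst u \<noteq> snd (snd u)}"

definition S2 :: "nat \<times> nat \<times> nat \<Rightarrow> (nat \<times> nat) set" where
  "S2 u = {(fst u, fst (snd u)), (snd (snd u), fst (snd u))}"

lemma core_le:
  "card (coreD (bip_verts n1 n2) (bip_adj E)) \<le> 2 * card {u \<in> Tset n1 n2. \<forall>e\<in>S2 u. E e}"
proof -
  let ?V = "bip_verts n1 n2"
  let ?C = "coreD ?V (bip_adj E)"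
  let ?Ch = "{u \<in> Tset n1 n2. \<forall>e\<in>S2 u. E e}"
  define lv where "lv = (\<lambda>x::(nat + nat) \<times> (nat + nat). if isl (fst x) then fst x else snd x)"
  define rv where "rv = (\<lambda>x::(nat + nat) \<times> (nat + nat). if isl (fst x) then snd x else fst x)"
  define g where "g = (\<lambda>x. (isl (fst x), (projl (lv x), projr (rv x),
        SOME i'. i' < n1 \<and> i' \<noteq> projl (lv x) \<and> E (i', projr (rv x)))))"
  have props: "\<exists>i j. lv x = Inl i \<and> rv x = Inr j \<and> i < n1 \<and> j < n2 \<and> E (i, j) \<and>
      (\<exists>i'. i' < n1 \<and> i' \<noteq> i \<and> E (i', j)) \<and>
      x = (if isl (fst x) then (Inl i, Inr j) else (Inr j, Inl i))" if x: "x \<in> ?C" for x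
  proof -
    obtain a b where ab: "x = (a, b)" by fastforce
    have abD: "a \<in> ?V" "b \<in> ?V" "bip_adj E a b"
      and wa: "\<exists>w\<in>?V. bip_adj E a w \<and> w \<noteq> b" and wb: "\<exists>w\<in>?V. bip_adj E b w \<and> w \<noteq> a"
      using x ab by (auto simp: coreD_def darts_def)
    show ?thesis
    proof (cases a)
      case (Inl i)
      then obtain j where bj: "b = Inr j" using abD(3) by (cases b) auto
      obtain w where w: "w \<in> ?V" "bip_adj E b w" "w \<noteq> a" using wb by blast
      then obtain i' where "w = Inl i'" using bj by (cases w) auto
      hence "i' < n1" "i' \<noteq> i" "E (i', j)" using w bj Inl by (auto simp: bip_verts_iff)
      thus ?thesis using Inl bj ab abD by (auto simp: lv_def rv_def bip_verts_iff)
    next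
      case (Inr j)
      then obtain i where bi: "b = Inl i" using abD(3) by (cases b) auto
      obtain w where w: "w \<in> ?V" "bip_adj E a w" "w \<noteq> b" using wa by blast
      then obtain i' where "w = Inl i'" using Inr by (cases w) auto
      hence "i' < n1" "i' \<noteq> i" "E (i', j)" using w bi Inr by (auto simp: bip_verts_iff)
      thus ?thesis using Inr bi ab abD by (auto simp: lv_def rv_def bip_verts_iff)
    qed
  qed
  have inj: "inj_on g ?C"
  proof (rule inj_onI)
    fix x y assume x: "x \<in> ?C" and y: "y \<in> ?C" and eq: "g x = g y"
    obtain i j where X: "lv x = Inl i" "rv x = Inr j" "x = (if isl (fst x) then (Inl i, Inr j) else (Inr j, Inl i))"
      using props[OF x] by blast
    obtain i2 j2 where Y: "lv y = Inl i2" "rv y = Inr j2" "y = (if isl (fst y) then (Inl i2, Inr j2) else (Inr j2, Inl i2))"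
      using props[OF y] by blast
    have e: "isl (fst x) = isl (fst y)" "i = i2" "j = j2" using eq X(1,2) Y(1,2) by (auto simp: g_def)
    show "x = y"
    proof (cases "isl (fst x)")
      case True
      hence T2: "isl (fst y)" using e by simp
      have "x = (Inl i, Inr j)" using X(3) True by (simp only: True if_True)
      moreover have "y = (Inl i2, Inr j2)" using Y(3) T2 by (simp only: T2 if_True)
      ultimately show ?thesis using e by simp
    next
      case False
      hence T2: "\<not> isl (fst y)" using e by simp
      have "x = (Inr j, Inl i)" using X(3) False by (simp only: False if_False)
      moreover have "y = (Inr j2, Inl i2)" using Y(3) T2 by (simp only: T2 if_False)
      ultimately show ?thesis using e by simp
    qed
  qed
  have img: "g ` ?C \<subseteq> UNIV \<times> ?Ch"
  proof
    fix z assume "z \<in> g ` ?C"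
    then obtain x where x: "x \<in> ?C" "z = g x" by blast
    obtain i j where X: "lv x = Inl i" "rv x = Inr j" "i < n1" "j < n2" "E (i, j)"
      and ex: "\<exists>i'. i' < n1 \<and> i' \<noteq> i \<and> E (i', j)"
      using props[OF x(1)] by blast
    define i' where "i' = (SOME i'. i' < n1 \<and> i' \<noteq> i \<and> E (i', j))"
    have i': "i' < n1 \<and> i' \<noteq> i \<and> E (i', j)" unfolding i'_def by (rule someI_ex[OF ex])
    have "z = (isl (fst x), (i, j, i'))" using x(2) X i'_def by (simp add: g_def)
    moreover have "(i, j, i') \<in> ?Ch" using X i' by (auto simp: Tset_def S2_def)
    ultimately show "z \<in> UNIV \<times> ?Ch" by simp
  qed
  have finCh: "finite ?Ch" by (rule finite_subset[of _ "{..<n1} \<times> {..<n2} \<times> {..<n1}"]) (auto simp: Tset_def)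
  have "card ?C = card (g ` ?C)" using card_image[OF inj] by simp
  also have "\<dots> \<le> card ((UNIV :: bool set) \<times> ?Ch)" by (rule card_mono) (use finCh img in auto)
  also have "\<dots> = 2 * card ?Ch" by (simp add: card_cartesian_product)
  finally show ?thesis .
qed

lemma exp_Ch:
  assumes p: "0 \<le> p" "p \<le> 1"
  shows "measure_pmf.expectation (G_bip n1 n2 p) (\<lambda>E. real (card {u \<in> Tset n1 n2. \<forall>e\<in>S2 u. E e}))
         \<le> real n1 * real n2 * real n1 * p ^ 2"
proof -
  have finT: "finite (Tset n1 n2)" by (simp add: Tset_def)
  have "measure_pmf.expectation (G_bip n1 n2 p) (\<lambda>E. real (card {u \<in> Tset n1 n2. \<forall>e\<in>S2 u. E e}))
      = (\<Sum>u\<in>Tset n1 n2. p ^ card (S2 u))"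
    unfolding G_bip_PB by (rule exp_count[OF _ finT p]) (auto simp: Tset_def S2_def)
  also have "\<dots> = (\<Sum>u\<in>Tset n1 n2. p ^ 2)"
    by (rule sum.cong) (auto simp: Tset_def S2_def power2_eq_square)
  also have "\<dots> = real (card (Tset n1 n2)) * p ^ 2" by simp
  also have "\<dots> \<le> real (n1 * n2 * n1) * p ^ 2"
  proof (rule mult_right_mono)
    have "card (Tset n1 n2) \<le> card ({..<n1} \<times> {..<n2} \<times> {..<n1})"
      by (rule card_mono) (auto simp: Tset_def)
    hence "card (Tset n1 n2) \<le> n1 * n2 * n1" by (simp add: card_cartesian_product)
    thus "real (card (Tset n1 n2)) \<le> real (n1 * n2 * n1)" by (simp only: of_nat_le_iff)
  qed (use p in simp)
  finally show ?thesis by simp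
qed


lemma fin_G: "finite (set_pmf (G_bip n1 n2 p))"
  by (simp add: G_bip_def set_Pi_pmf finite_PiE_dflt)

lemma intG: "integrable (measure_pmf (G_bip n1 n2 p)) (f :: _ \<Rightarrow> real)"
  by (rule integrable_measure_pmf_finite[OF fin_G])

lemma f_le_Y:
  assumes M: "M > 0"
  shows "real_of_int (f_bip n1 n2 E) \<le> 1 + 2 * real (card {u \<in> Tset n1 n2. \<forall>e\<in>S2 u. E e}) / real M
            + real (card (cycles (bip_verts n1 n2) (bip_adj E) M))"
proof -
  have "real_of_int (f_bip n1 n2 E) \<le> 1 + real (card (coreD (bip_verts n1 n2) (bip_adj E))) / real M
            + real (card (cycles (bip_verts n1 n2) (bip_adj E) M))"
    unfolding f_bip_def
    by (rule mgf_bound[OF finite_bip_verts _ _ M]) (rule bip_symm, rule bip_irr)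
  also have "real (card (coreD (bip_verts n1 n2) (bip_adj E))) / real M \<le>
             2 * real (card {u \<in> Tset n1 n2. \<forall>e\<in>S2 u. E e}) / real M"
  proof (rule divide_right_mono)
    show "real (card (coreD (bip_verts n1 n2) (bip_adj E))) \<le> 2 * real (card {u \<in> Tset n1 n2. \<forall>e\<in>S2 u. E e})"
    proof -
      have "card (coreD (bip_verts n1 n2) (bip_adj E)) \<le> 2 * card {u \<in> Tset n1 n2. \<forall>e\<in>S2 u. E e}"
        by (rule core_le)
      hence "real (card (coreD (bip_verts n1 n2) (bip_adj E))) \<le> real (2 * card {u \<in> Tset n1 n2. \<forall>e\<in>S2 u. E e})"
        by (simp only: of_nat_le_iff)
      thus ?thesis by simp
    qed
  qed simp
  finally show ?thesis by simp
qed

lemma bad_bound: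
  assumes d: "d > 1" and n1: "n1 \<ge> 1" and n12: "n1 \<le> n2" and nd: "d \<le> real n1"
    and M: "M > 0" and eps: "\<epsilon> > 0"
  defines "p \<equiv> d / sqrt (real n1 * real n2)"
  shows "measure_pmf.prob (G_bip n1 n2 p) {E. \<not> real_of_int (f_bip n1 n2 E) \<le> \<epsilon> * real n1}
         \<le> (1 + (\<Sum>L\<le>M. 2 * (d ^ 2) ^ (L div 2))) / (\<epsilon> * real n1) + 2 * d ^ 2 / (real M * \<epsilon>)"
proof -
  let ?G = "G_bip n1 n2 p"
  let ?Ch = "\<lambda>E. real (card {u \<in> Tset n1 n2. \<forall>e\<in>S2 u. E e})"
  let ?Cy = "\<lambda>E. real (card (cycles (bip_verts n1 n2) (bip_adj E) M))"
  define Y where "Y = (\<lambda>E. 1 + 2 * ?Ch E / real M + ?Cy E)"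
  define C where "C = (\<Sum>L\<le>M. 2 * (d ^ 2) ^ (L div 2))"
  have n1pos: "real n1 > 0" using n1 by simp
  have n2pos: "real n2 > 0" using n1 n12 by simp
  have prodpos: "real n1 * real n2 > 0" using n1pos n2pos by simp
  have sq: "sqrt (real n1 * real n2) ^ 2 = real n1 * real n2" using prodpos by simp
  have sqge: "real n1 \<le> sqrt (real n1 * real n2)"
  proof -
    have "real n1 * real n1 \<le> real n1 * real n2" using n12 n1pos by (simp add: mult_left_mono)
    hence "sqrt (real n1 * real n1) \<le> sqrt (real n1 * real n2)" by (rule real_sqrt_le_mono)
    thus ?thesis using n1pos by simp
  qed
  have p0: "0 \<le> p" unfolding p_def using d by simp
  have p1: "p \<le> 1" unfolding p_def using nd sqge d prodpos by (simp add: divide_le_eq_1)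
  have pp: "real n1 * real n2 * p ^ 2 = d ^ 2"
  proof -
    have "p ^ 2 = d ^ 2 / (sqrt (real n1 * real n2)) ^ 2" unfolding p_def by (rule power_divide)
    also have "\<dots> = d ^ 2 / (real n1 * real n2)" by (simp only: sq)
    finally have "p ^ 2 = d ^ 2 / (real n1 * real n2)" .
    moreover have "real n1 * real n2 \<noteq> 0" using n1pos n2pos by simp
    ultimately show ?thesis by simp
  qed
  have Ch_exp: "measure_pmf.expectation ?G ?Ch \<le> d ^ 2 * real n1"
  proof -
    have "measure_pmf.expectation ?G ?Ch \<le> real n1 * real n2 * real n1 * p ^ 2"
      by (rule exp_Ch[OF p0 p1])
    also have "\<dots> = (real n1 * real n2 * p ^ 2) * real n1" by (simp only: ac_simps)
    also have "\<dots> = d ^ 2 * real n1" by (simp only: pp)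
    finally show ?thesis .
  qed
  have Cy_exp: "measure_pmf.expectation ?G ?Cy \<le> C"
  proof -
    have "measure_pmf.expectation ?G ?Cy = (\<Sum>c\<in>Ualt n1 n2 M. p ^ length c)"
      by (rule exp_cycles[OF p0 p1])
    also have "\<dots> \<le> (\<Sum>L\<le>M. 2 * (real n1 * real n2 * p ^ 2) ^ (L div 2))" by (rule sum_Ualt[OF p0])
    also have "\<dots> = C" unfolding C_def pp ..
    finally show ?thesis .
  qed
  have EY: "measure_pmf.expectation ?G Y = 1 + 2 * measure_pmf.expectation ?G ?Ch / real M + measure_pmf.expectation ?G ?Cy"
  proof -
    have "measure_pmf.expectation ?G Y = measure_pmf.expectation ?G (\<lambda>E. 1 + 2 * ?Ch E / real M) + measure_pmf.expectation ?G ?Cy"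
      unfolding Y_def by (rule Bochner_Integration.integral_add[OF intG intG])
    also have "measure_pmf.expectation ?G (\<lambda>E. 1 + 2 * ?Ch E / real M) = measure_pmf.expectation ?G (\<lambda>E. 1) + measure_pmf.expectation ?G (\<lambda>E. 2 * ?Ch E / real M)"
      by (rule Bochner_Integration.integral_add[OF intG intG])
    also have "measure_pmf.expectation ?G (\<lambda>E. 1::real) = 1" by (simp add: measure_pmf.prob_space)
    also have "measure_pmf.expectation ?G (\<lambda>E. 2 * ?Ch E / real M) = 2 * measure_pmf.expectation ?G ?Ch / real M"
      by simp
    finally show ?thesis .
  qed
  have EYb: "measure_pmf.expectation ?G Y \<le> 1 + 2 * (d ^ 2 * real n1) / real M + C"
  proof -
    have "2 * measure_pmf.expectation ?G ?Ch / real M \<le> 2 * (d ^ 2 * real n1) / real M"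
      by (rule divide_right_mono) (use Ch_exp in simp_all)
    thus ?thesis using EY Cy_exp by linarith
  qed
  have Ynn: "0 \<le> Y E" for E unfolding Y_def by simp
  have c0: "0 < \<epsilon> * real n1" using eps n1pos by simp
  have sub: "{E. \<not> real_of_int (f_bip n1 n2 E) \<le> \<epsilon> * real n1} \<subseteq> {E \<in> space (measure_pmf ?G). \<epsilon> * real n1 \<le> Y E}"
  proof
    fix E assume "E \<in> {E. \<not> real_of_int (f_bip n1 n2 E) \<le> \<epsilon> * real n1}"
    hence "\<epsilon> * real n1 < real_of_int (f_bip n1 n2 E)" by simp
    also have "\<dots> \<le> Y E" unfolding Y_def by (rule f_le_Y[OF M])
    finally show "E \<in> {E \<in> space (measure_pmf ?G). \<epsilon> * real n1 \<le> Y E}" by simp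
  qed
  have "measure_pmf.prob ?G {E. \<not> real_of_int (f_bip n1 n2 E) \<le> \<epsilon> * real n1}
        \<le> measure_pmf.prob ?G {E \<in> space (measure_pmf ?G). \<epsilon> * real n1 \<le> Y E}"
    by (rule measure_pmf.finite_measure_mono[OF sub]) simp
  also have "\<dots> \<le> measure_pmf.expectation ?G Y / (\<epsilon> * real n1)"
    by (rule integral_Markov_inequality_measure[OF intG _ _ c0]) (simp_all add: Ynn)
  also have "\<dots> \<le> (1 + 2 * (d ^ 2 * real n1) / real M + C) / (\<epsilon> * real n1)"
    by (rule divide_right_mono[OF EYb]) (use c0 in simp)
  also have "\<dots> = (1 + C) / (\<epsilon> * real n1) + 2 * d ^ 2 / (real M * \<epsilon>)"
    using n1pos eps M by (simp add: field_simps)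
  finally show ?thesis unfolding C_def .
qed


theorem corollary4p2:
  fixes d :: real and n2 :: "nat \<Rightarrow> nat"
  assumes "d > 1"
    and "\<And>n1. n1 \<le> n2 n1"
  shows "\<forall>\<epsilon>>0. (\<lambda>n1. measure_pmf.prob (G_bip n1 (n2 n1) (d / sqrt (real n1 * real (n2 n1))))
                   {E. real_of_int (f_bip n1 (n2 n1) E) \<le> \<epsilon> * real n1})
              \<longlonglongrightarrow> 1"
proof (intro allI impI)
  fix \<epsilon> :: real assume eps: "\<epsilon> > 0"
  have d: "d > 1" using assms(1) .
  let ?G = "\<lambda>n1. G_bip n1 (n2 n1) (d / sqrt (real n1 * real (n2 n1)))"
  let ?good = "\<lambda>n1. {E. real_of_int (f_bip n1 (n2 n1) E) \<le> \<epsilon> * real n1}"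
  let ?bad = "\<lambda>n1. {E. \<not> real_of_int (f_bip n1 (n2 n1) E) \<le> \<epsilon> * real n1}"
  show "(\<lambda>n1. measure_pmf.prob (?G n1) (?good n1)) \<longlonglongrightarrow> 1"
  proof (rule LIMSEQ_I)
    fix r :: real assume r: "r > 0"
    define M where "M = nat \<lceil>8 * d ^ 2 / (r * \<epsilon>)\<rceil> + 1"
    have M0: "M > 0" unfolding M_def by simp
    have rM: "8 * d ^ 2 / (r * \<epsilon>) \<le> real M"
    proof -
      have "8 * d ^ 2 / (r * \<epsilon>) \<le> real (nat \<lceil>8 * d ^ 2 / (r * \<epsilon>)\<rceil>)" by linarith
      thus ?thesis unfolding M_def by simp
    qed
    have term2: "2 * d ^ 2 / (real M * \<epsilon>) \<le> r / 4"
    proof -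
      have Mpos: "real M > 0" using M0 by simp
      have "8 * d ^ 2 \<le> real M * (r * \<epsilon>)" using rM r eps by (simp add: pos_divide_le_eq)
      hence "2 * d ^ 2 * 4 \<le> r * (real M * \<epsilon>)" by (simp add: algebra_simps)
      thus ?thesis using Mpos eps r by (simp add: pos_divide_le_eq pos_le_divide_eq)
    qed
    define C where "C = (\<Sum>L\<le>M. 2 * (d ^ 2) ^ (L div 2))"
    have C0: "C \<ge> 0" unfolding C_def by (rule sum_nonneg) simp
    obtain N :: nat where N: "4 * (1 + C) / (\<epsilon> * r) < real N" using reals_Archimedean2 by blast
    define no where "no = max (max N 1) (nat \<lceil>d\<rceil>)"
    have "\<forall>n\<ge>no. norm (measure_pmf.prob (?G n) (?good n) - 1) < r"
    proof (intro allI impI)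
      fix n assume n: "no \<le> n"
      have n1: "n \<ge> 1" using n unfolding no_def by simp
      have nN: "real N \<le> real n" using n unfolding no_def by simp
      have nd: "d \<le> real n"
      proof -
        have "nat \<lceil>d\<rceil> \<le> n" using n unfolding no_def by simp
        hence "real (nat \<lceil>d\<rceil>) \<le> real n" by (simp only: of_nat_le_iff)
        moreover have "d \<le> real (nat \<lceil>d\<rceil>)" by linarith
        ultimately show ?thesis by linarith
      qed
      have npos: "real n > 0" using n1 by simp
      have bb: "measure_pmf.prob (?G n) (?bad n)
         \<le> (1 + C) / (\<epsilon> * real n) + 2 * d ^ 2 / (real M * \<epsilon>)"
        unfolding C_def by (rule bad_bound[OF d n1 assms(2) nd M0 eps])
      have t1: "(1 + C) / (\<epsilon> * real n) < r / 4"
      proof -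
        have "4 * (1 + C) / (\<epsilon> * r) < real n" using N nN by linarith
        hence "4 * (1 + C) < real n * (\<epsilon> * r)" using eps r by (simp add: pos_divide_less_eq)
        hence "(1 + C) * 4 < r * (\<epsilon> * real n)" by (simp add: algebra_simps)
        thus ?thesis using eps npos by (simp add: pos_divide_less_eq pos_less_divide_eq)
      qed
      have bad_lt: "measure_pmf.prob (?G n) (?bad n) < r" using bb t1 term2 r by linarith
      have "?good n = space (measure_pmf (?G n)) - ?bad n" by auto
      hence "measure_pmf.prob (?G n) (?good n) = 1 - measure_pmf.prob (?G n) (?bad n)"
        using measure_pmf.prob_compl[of "?bad n" "?G n"] by simp
      moreover have "measure_pmf.prob (?G n) (?bad n) \<ge> 0" by simp
      ultimately show "norm (measure_pmf.prob (?G n) (?good n) - 1) < r" using bad_lt by simp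
    qed
    thus "\<exists>no. \<forall>n\<ge>no. norm (measure_pmf.prob (?G n) (?good n) - 1) < r" by blast
  qed
qed


end
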